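(* In the setting described in the context, suppose $T$ is irreducible and $A$ is irreducible. Then $G$ is irreducible, or, after a simultaneous permutation of rows and columns, it takes the form \[ G=\begin{pmatrix}G_1&O\\ G_{\bullet,1}&G_\bullet\end{pmatrix}, \] where $G_1$ is irreducible and $G_\bullet$ is strictly lower triangular.
   Context: Let $M_0,M$ be positive integers. Consider a discrete-time Markov chain $\{(X_n,S_n)\}_{n\ge0}$ of M/G/1 type with state space $\{(0,j):1\le j\le M_0\}\cup\{(k,j):k\ge1,1\le j\le M\}$ (level $k$ = states with first coordinate $k$), with transition matrix in lexicographic order \[ T=\begin{pmatrix}B(0)&B(1)&B(2)&\cdots\\ C(0)&A(1)&A(2)&\cdots\\ O&A(0)&A(1)&\cdots\\ O&O&A(0)&\cdots\\ \vdots&\vdots&\vdots&\ddots\end{pmatrix}, \] with nonnegative blocks $A(k)$ ($M\times M$, $k\ge0$), $B(0)$ ($M_0\times M_0$), $B(k)$ ($M_0\times M$, $k\ge1$), $C(0)$ ($M\times M_0$); $A=\sum_{k\ge0}A(k)$ is stochastic and $B(0)e+\sum_{k\ge1}B(k)e=e$. $G$ is the $M\times M$ matrix with $[G]_{i,j}=\Pr[S_{a(k)}=j\mid X_0=k+1,S_0=i]$ for any fixed $k\ge1$ (independent of $k$), where $a(k)=\inf\{n\ge1:X_n=k\}$; equivalently $G$ is the minimal nonnegative solution of $X=\sum_{k\ge0}A(k)X^k$. *)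

theory Defs
  imports Complex_Main
begin

text \<open>Matrices are represented as functions nat => nat => real; an n x n matrix
  only uses indices below n (0-indexed).\<close>

definition mmul :: "nat \<Rightarrow> (nat \<Rightarrow> nat \<Rightarrow> real) \<Rightarrow> (nat \<Rightarrow> nat \<Rightarrow> real) \<Rightarrow> nat \<Rightarrow> nat \<Rightarrow> real" where
  "mmul n X Y i j = (\<Sum>l<n. X i l * Y l j)"

fun mpow :: "nat \<Rightarrow> (nat \<Rightarrow> nat \<Rightarrow> real) \<Rightarrow> nat \<Rightarrow> nat \<Rightarrow> nat \<Rightarrow> real" where
  "mpow n X 0 = (\<lambda>i j. if i = j then 1 else 0)"
| "mpow n X (Suc k) = mmul n X (mpow n X k)"

definition irreducible_on :: "'s set \<Rightarrow> ('s \<Rightarrow> 's \<Rightarrow> real) \<Rightarrow> bool" where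
  "irreducible_on S P \<longleftrightarrow>
     (\<forall>s\<in>S. \<forall>t\<in>S. (s, t) \<in> {(u, v). u \<in> S \<and> v \<in> S \<and> P u v > 0}\<^sup>+)"

definition valid_state :: "nat \<Rightarrow> nat \<Rightarrow> nat \<times> nat \<Rightarrow> bool" where
  "valid_state M0 M s = (if fst s = 0 then snd s < M0 else snd s < M)"

text \<open>Transition matrix T. B 0 is the M0 x M0 block, B k (k >= 1) the M0 x M blocks,
  C0 the M x M0 block, A k the M x M blocks.\<close>

definition Tmat ::
  "(nat \<Rightarrow> nat \<Rightarrow> nat \<Rightarrow> real) \<Rightarrow> (nat \<Rightarrow> nat \<Rightarrow> nat \<Rightarrow> real) \<Rightarrow> (nat \<Rightarrow> nat \<Rightarrow> real)
    \<Rightarrow> nat \<times> nat \<Rightarrow> nat \<times> nat \<Rightarrow> real" where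
  "Tmat A B C0 s t =
     (let (k, i) = s; (k', j) = t in
      if k = 0 then B k' i j
      else if k' = 0 then (if k = 1 then C0 i j else 0)
      else if k \<le> k' + 1 then A (k' + 1 - k) i j else 0)"

definition is_G_solution :: "nat \<Rightarrow> (nat \<Rightarrow> nat \<Rightarrow> nat \<Rightarrow> real) \<Rightarrow> (nat \<Rightarrow> nat \<Rightarrow> real) \<Rightarrow> bool" where
  "is_G_solution M A X \<longleftrightarrow>
     (\<forall>i<M. \<forall>j<M. X i j \<ge> 0) \<and>
     (\<forall>i<M. \<forall>j<M. (\<lambda>k. mmul M (A k) (mpow M X k) i j) sums X i j)"

definition is_minimal_G :: "nat \<Rightarrow> (nat \<Rightarrow> nat \<Rightarrow> nat \<Rightarrow> real) \<Rightarrow> (nat \<Rightarrow> nat \<Rightarrow> real) \<Rightarrow> bool" where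
  "is_minimal_G M A G \<longleftrightarrow> is_G_solution M A G \<and>
     (\<forall>X. is_G_solution M A X \<longrightarrow> (\<forall>i<M. \<forall>j<M. G i j \<le> X i j))"

end

theory Submission imports Defs begin
lemma relpow_bound:
  assumes "R \<subseteq> {..<M} \<times> {..<M}" "(a,b) \<in> R^^n" "a < (M::nat)"
  shows "b < M"
  using assms(2,3)
proof (induction n arbitrary: b)
  case 0 then show ?case by simp
next
  case (Suc n)
  then obtain y where "(a,y)\<in>R^^n" "(y,b)\<in>R" by (meson relpow_Suc_E)
  then show ?case using assms(1) by auto
qed

lemma mpow_nonneg:
  assumes "\<forall>i<M. \<forall>j<M. 0 \<le> G i j" "i < M" "j < M"
  shows "0 \<le> mpow M G k i j"
  using assms(2,3)
proof (induction k arbitrary: i j)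
  case 0 then show ?case by simp
next
  case (Suc k)
  then show ?case using assms(1) by (auto simp: mmul_def intro!: sum_nonneg mult_nonneg_nonneg)
qed

lemma mpow_pos:
  assumes nn: "\<forall>i<M. \<forall>j<M. 0 \<le> G i j"
    and R: "R = {(i,j). i<M \<and> j<M \<and> G i j > 0}"
  shows "(l,y) \<in> R^^k \<Longrightarrow> l < M \<Longrightarrow> 0 < mpow M G k l y"
proof (induction k arbitrary: l)
  case 0 then show ?case by simp
next
  case (Suc k)
  then obtain z where z: "(l,z)\<in>R" "(z,y)\<in>R^^k" by (meson relpow_Suc_E2)
  have zM: "z < M" using z R by auto
  have yM: "y < M" using relpow_bound[of R M z y k] z zM R by auto
  have "0 < G l z * mpow M G k z y" using z zM Suc R by auto
  moreover have "\<forall>x\<in>{..<M}. 0 \<le> G l x * mpow M G k x y"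
    using nn mpow_nonneg[OF nn] Suc yM by auto
  ultimately have "0 < (\<Sum>x<M. G l x * mpow M G k x y)"
    using zM by (intro sum_pos2[where i=z]) auto
  then show ?case by (simp add: mmul_def)
qed

lemma G_closure:
  assumes sol: "is_G_solution M A G"
    and Ann: "\<forall>k. \<forall>i<M. \<forall>j<M. 0 \<le> A k i j"
    and R: "R = {(i,j). i<M \<and> j<M \<and> G i j > 0}"
    and x: "x < M" and l: "l < M" and y: "y < M" and A: "A k x l > 0" and p: "(l,y) \<in> R^^k"
  shows "(x,y) \<in> R"
proof -
  have nn: "\<forall>i<M. \<forall>j<M. 0 \<le> G i j" using sol by (simp add: is_G_solution_def)
  have s: "(\<lambda>k. mmul M (A k) (mpow M G k) x y) sums G x y" using sol x y by (simp add: is_G_solution_def)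
  have tnn: "\<And>k. 0 \<le> mmul M (A k) (mpow M G k) x y"
    unfolding mmul_def using Ann mpow_nonneg[OF nn] x y by (auto intro!: sum_nonneg mult_nonneg_nonneg)
  have "0 < A k x l * mpow M G k l y" using A mpow_pos[OF nn R p l] by simp
  moreover have "\<forall>z\<in>{..<M}. 0 \<le> A k x z * mpow M G k z y"
    using Ann mpow_nonneg[OF nn] x y by auto
  ultimately have "0 < mmul M (A k) (mpow M G k) x y"
    unfolding mmul_def using l by (intro sum_pos2[where i=l]) auto
  then have "0 < G x y" using suminf_pos2[OF sums_summable[OF s] tnn] sums_unique[OF s] by simp
  then show ?thesis using R x y by auto
qed

lemma T_edge_down:
  assumes clos: "\<And>k x l y. x<M \<Longrightarrow> l<M \<Longrightarrow> y<M \<Longrightarrow> A k x l > 0 \<Longrightarrow> (l,y)\<in>R^^k \<Longrightarrow> (x,y)\<in>R"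
    and e: "valid_state M0 M (h,i)" "valid_state M0 M (h',j)" "Tmat A B C0 (h,i) (h',j) > 0"
    and h: "2 \<le> h" "h' \<le> 1"
  shows "h = 2 \<and> h' = 1 \<and> (i,j) \<in> R"
proof -
  have "h' \<noteq> 0" using e h by (cases "h' = 0") (auto simp: Tmat_def)
  then have h': "h' = 1" using h by simp
  then have h2: "h = 2" using e h by (auto simp: Tmat_def split: if_splits)
  have "A 0 i j > 0" using e h' h2 by (simp add: Tmat_def)
  moreover have "i < M" "j < M" using e h' h2 by (auto simp: valid_state_def)
  ultimately have "(i,j)\<in>R" using clos[of i j j 0] by simp
  then show ?thesis using h' h2 by simp
qed

lemma T_path:
  assumes RM: "R \<subseteq> {..<M} \<times> {..<M}"
    and clos: "\<And>k x l y. x<M \<Longrightarrow> l<M \<Longrightarrow> y<M \<Longrightarrow> A k x l > 0 \<Longrightarrow> (l,y)\<in>R^^k \<Longrightarrow> (x,y)\<in>R"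
    and ET: "ET = {(u,v). valid_state M0 M u \<and> valid_state M0 M v \<and> Tmat A B C0 u v > 0}"
    and p: "(s,t) \<in> ET^+" and t: "fst t \<le> 1"
  shows "2 \<le> fst s \<Longrightarrow> \<exists>j. (snd s, j) \<in> R^^(fst s - 1)"
  using p
proof (induction s rule: converse_trancl_induct)
  case (base y)
  obtain h i where y: "y = (h,i)" by (cases y)
  obtain h' j where tt: "t = (h',j)" by (cases t)
  have "h = 2 \<and> h' = 1 \<and> (i,j) \<in> R"
    using T_edge_down[OF clos] base ET y tt t by auto
  then show ?case using y by auto
next
  case (step y z)
  obtain h i where y: "y = (h,i)" by (cases y)
  obtain h1 i1 where z: "z = (h1,i1)" by (cases z)
  have vy: "valid_state M0 M (h,i)" and vz: "valid_state M0 M (h1,i1)"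
    and tp: "Tmat A B C0 (h,i) (h1,i1) > 0" using step ET y z by auto
  show ?case
  proof (cases "h1 \<le> 1")
    case True
    have "h = 2 \<and> h1 = 1 \<and> (i,i1) \<in> R"
      using T_edge_down[OF clos vy vz tp] step True y by auto
    then show ?thesis using y by auto
  next
    case False
    have h2: "2 \<le> h" using step y by simp
    obtain j where j: "(i1,j) \<in> R^^(h1 - 1)" using step.IH z False by auto
    have hle: "h \<le> h1 + 1" and Ap: "A (h1 + 1 - h) i i1 > 0"
      using tp h2 False by (auto simp: Tmat_def split: if_splits)
    have iM: "i < M" "i1 < M" using vy vz h2 False by (auto simp: valid_state_def)
    have "h1 - 1 = (h1 + 1 - h) + (h - 2)" using hle h2 False by simp
    then have "(i1,j) \<in> R^^(h1+1-h) O R^^(h-2)" using j by (simp add: relpow_add)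
    then obtain w where w: "(i1,w)\<in>R^^(h1+1-h)" "(w,j)\<in>R^^(h-2)" by auto
    have "w < M" using relpow_bound[OF RM w(1) iM(2)] .
    then have "(i,w) \<in> R" using clos[OF iM(1) iM(2) _ Ap w(1)] by simp
    then have "(i,j) \<in> R^^(Suc (h-2))" using w(2) relpow_Suc_I2 by metis
    moreover have "Suc (h-2) = h - 1" using h2 by simp
    ultimately show ?thesis using y by auto
  qed
qed

lemma A_path:
  fixes A :: "nat \<Rightarrow> nat \<Rightarrow> nat \<Rightarrow> real"
  assumes RM: "R \<subseteq> {..<M} \<times> {..<M}"
    and clos: "\<And>k x l y. x<M \<Longrightarrow> l<M \<Longrightarrow> y<M \<Longrightarrow> A k x l > 0 \<Longrightarrow> (l,y)\<in>R^^k \<Longrightarrow> (x,y)\<in>R"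
    and Ann: "\<forall>k. \<forall>i<M. \<forall>j<M. 0 \<le> A k i j"
    and E: "E = {(u,v). u<M \<and> v<M \<and> (\<Sum>k. A k u v) > 0}"
    and p: "(x,y) \<in> E^+"
  shows "\<exists>c d. 1 \<le> d \<and> (\<forall>n j. (y,j) \<in> R^^(n+c) \<longrightarrow> (x,j) \<in> R^^(n+d))"
proof -
  have onestep: "\<exists>c. \<forall>n j. (v,j) \<in> R^^(n+c) \<longrightarrow> (u,j) \<in> R^^(n+1)" if "(u,v) \<in> E" for u v
  proof -
    have uv: "u < M" "v < M" "(\<Sum>k. A k u v) > 0" using that E by auto
    have "\<exists>k. A k u v > 0"
    proof (rule ccontr)
      assume "\<not> (\<exists>k. A k u v > 0)"
      then have "\<forall>k. A k u v = 0" proof (intro allI)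
        fix k
        have "0 \<le> A k u v" using Ann uv by blast
        moreover have "\<not> 0 < A k u v" using \<open>\<not> (\<exists>k. A k u v > 0)\<close> by blast
        ultimately show "A k u v = 0" by linarith
      qed
      then have "(\<Sum>k. A k u v) = 0" by simp
      then show False using uv by auto
    qed
    then obtain k where k: "A k u v > 0" by blast
    show ?thesis
    proof (intro exI allI impI)
      fix n j assume "(v,j) \<in> R^^(n+k)"
      then have "(v,j) \<in> R^^k O R^^n" by (simp add: relpow_add add.commute)
      then obtain w where w: "(v,w)\<in>R^^k" "(w,j)\<in>R^^n" by auto
      have "w < M" using relpow_bound[OF RM w(1) uv(2)] .
      then have "(u,w)\<in>R" using clos[OF uv(1) uv(2) _ k w(1)] by simp
      then show "(u,j) \<in> R^^(n+1)" using w(2) relpow_Suc_I2 by (metis Suc_eq_plus1)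
    qed
  qed
  show ?thesis using p
  proof (induction y rule: trancl_induct)
    case (base y)
    then obtain c where "\<forall>n j. (y,j) \<in> R^^(n+c) \<longrightarrow> (x,j) \<in> R^^(n+1)" using onestep by blast
    then show ?case by (intro exI[of _ c] exI[of _ 1]) auto
  next
    case (step y z)
    obtain c1 d1 where cd: "1 \<le> d1" "\<forall>n j. (y,j) \<in> R^^(n+c1) \<longrightarrow> (x,j) \<in> R^^(n+d1)" using step.IH by blast
    obtain k where k: "\<forall>n j. (z,j) \<in> R^^(n+k) \<longrightarrow> (y,j) \<in> R^^(n+1)" using onestep[OF step(2)] by blast
    have "\<forall>n j. (z,j) \<in> R^^(n+(c1+k)) \<longrightarrow> (x,j) \<in> R^^(n+(d1+1))"
    proof (intro allI impI)
      fix n j assume "(z,j) \<in> R^^(n+(c1+k))"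
      then have "(z,j) \<in> R^^((n+c1)+k)" by (simp add: add.assoc)
      then have "(y,j) \<in> R^^((n+c1)+1)" using k by blast
      then have "(y,j) \<in> R^^((n+1)+c1)" by (simp add: algebra_simps)
      then have "(x,j) \<in> R^^((n+1)+d1)" using cd by blast
      then show "(x,j) \<in> R^^(n+(d1+1))" by (simp add: algebra_simps)
    qed
    then show ?case using cd by (intro exI[of _ "c1+k"] exI[of _ "d1+1"]) simp
  qed
qed

lemma relpow_cycle_mult: "(b,b) \<in> R^^p \<Longrightarrow> (b,b) \<in> R^^(p*K)"
proof (induction K)
  case 0 then show ?case by simp
next
  case (Suc K)
  then have "(b,b) \<in> R^^p O R^^(p*K)" by auto
  then show ?case by (simp add: relpow_add[symmetric])
qed

theorem proposition2p1:
  fixes M0 M :: nat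
    and A :: "nat \<Rightarrow> nat \<Rightarrow> nat \<Rightarrow> real"
    and B :: "nat \<Rightarrow> nat \<Rightarrow> nat \<Rightarrow> real"
    and C0 :: "nat \<Rightarrow> nat \<Rightarrow> real"
    and G :: "nat \<Rightarrow> nat \<Rightarrow> real"
  assumes M0_pos: "0 < M0" and M_pos: "0 < M"
    and A_nonneg: "\<forall>k. \<forall>i<M. \<forall>j<M. 0 \<le> A k i j"
    and B0_nonneg: "\<forall>i<M0. \<forall>j<M0. 0 \<le> B 0 i j"
    and B_nonneg: "\<forall>k\<ge>1. \<forall>i<M0. \<forall>j<M. 0 \<le> B k i j"
    and C0_nonneg: "\<forall>i<M. \<forall>j<M0. 0 \<le> C0 i j"
    and A_summable: "\<forall>i<M. \<forall>j<M. summable (\<lambda>k. A k i j)"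
    and A_stoch: "\<forall>i<M. (\<Sum>j<M. (\<Sum>k. A k i j)) = 1"
    and B_summable: "\<forall>i<M0. \<forall>j<M. summable (\<lambda>k. B (Suc k) i j)"
    and B_stoch: "\<forall>i<M0. (\<Sum>j<M0. B 0 i j) + (\<Sum>j<M. (\<Sum>k. B (Suc k) i j)) = 1"
    and C_stoch: "\<forall>i<M. (\<Sum>j<M0. C0 i j) + (\<Sum>j<M. (\<Sum>k. A (Suc k) i j)) = 1"
    and T_irred: "irreducible_on {s. valid_state M0 M s} (Tmat A B C0)"
    and A_irred: "irreducible_on {..<M} (\<lambda>i j. \<Sum>k. A k i j)"
    and G_def: "is_minimal_G M A G"
  shows "irreducible_on {..<M} G \<or>
    (\<exists>\<sigma> m. bij_betw \<sigma> {..<M} {..<M} \<and> 0 < m \<and> m \<le> M \<and>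
       (\<forall>i<m. \<forall>j. m \<le> j \<and> j < M \<longrightarrow> G (\<sigma> i) (\<sigma> j) = 0) \<and>
       irreducible_on {..<m} (\<lambda>i j. G (\<sigma> i) (\<sigma> j)) \<and>
       (\<forall>i j. m \<le> i \<and> i \<le> j \<and> j < M \<longrightarrow> G (\<sigma> i) (\<sigma> j) = 0))"
proof -
  have sol: "is_G_solution M A G" using G_def by (simp add: is_minimal_G_def)
  have nn: "\<forall>i<M. \<forall>j<M. 0 \<le> G i j" using sol by (simp add: is_G_solution_def)
  define R where "R = {(i,j). i<M \<and> j<M \<and> G i j > 0}"
  have RM: "R \<subseteq> {..<M} \<times> {..<M}" unfolding R_def by auto
  have clos: "\<And>k x l y. x<M \<Longrightarrow> l<M \<Longrightarrow> y<M \<Longrightarrow> A k x l > 0 \<Longrightarrow> (l,y)\<in>R^^k \<Longrightarrow> (x,y)\<in>R"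
    using G_closure[OF sol A_nonneg R_def] by blast
  define ET where "ET = {(u,v). valid_state M0 M u \<and> valid_state M0 M v \<and> Tmat A B C0 u v > 0}"
  have rows: "\<exists>j. (i,j) \<in> R" if iM: "i < M" for i
  proof -
    have v1: "(2,i) \<in> {s. valid_state M0 M s}" "(0,0) \<in> {s. valid_state M0 M s}"
      using iM M0_pos by (auto simp: valid_state_def)
    have "((2,i),(0,0)) \<in> ET^+" using T_irred v1 unfolding irreducible_on_def ET_def mem_Collect_eq by blast
    have "\<exists>j. (snd (2::nat,i), j) \<in> R^^(fst (2::nat,i) - 1)"
      by (rule T_path[where A=A, OF RM clos ET_def \<open>((2,i),(0,0)) \<in> ET^+\<close>]) simp_all
    then obtain j where "(i,j) \<in> R^^1" by auto
    then show ?thesis by auto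
  qed
  have cyc: "\<exists>c<M. (c,c) \<in> R^+"
  proof (rule ccontr)
    assume na: "\<not> (\<exists>c<M. (c,c) \<in> R^+)"
    have "acyclic R" unfolding acyclic_def
    proof
      fix x show "(x,x) \<notin> R^+"
      proof
        assume "(x,x) \<in> R^+"
        moreover have "x < M"
        proof -
          obtain y where "(x,y) \<in> R" using \<open>(x,x) \<in> R^+\<close> by (rule converse_tranclE) auto
          then show ?thesis using RM by auto
        qed
        ultimately show False using na by blast
      qed
    qed
    then have "acyclic (R\<inverse>)" by (simp add: acyclic_converse)
    moreover have "finite (R\<inverse>)" using RM by (simp add: finite_subset)
    ultimately have "wf (R\<inverse>)" by (simp add: wf_iff_acyclic_if_finite)
    then obtain z where z: "z \<in> {..<M}" "\<forall>y. (y,z) \<in> R\<inverse> \<longrightarrow> y \<notin> {..<M}"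
      using M_pos unfolding wf_eq_minimal by (metis lessThan_iff)
    obtain j where "(z,j) \<in> R" using rows z(1) by auto
    then show False using z RM by auto
  qed
  define C where "C = {c. c<M \<and> (c,c) \<in> R^+}"
  define E where "E = {(u,v). u<M \<and> v<M \<and> (\<Sum>k. A k u v) > 0}"
  have reachC: "(x,b) \<in> R^+" if xM: "x < M" and bC: "b \<in> C" for x b
  proof -
    have "(x,b) \<in> E^+" using A_irred xM bC unfolding irreducible_on_def E_def C_def by auto
    have "\<exists>c d. 1 \<le> d \<and> (\<forall>n j. (b,j) \<in> R^^(n+c) \<longrightarrow> (x,j) \<in> R^^(n+d))"
      apply (rule A_path[where A=A and R=R and M=M and E=E])
      using RM clos A_nonneg E_def \<open>(x,b) \<in> E^+\<close> by blast+
    then obtain c d where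
      cd: "1 \<le> d" "\<forall>n j. (b,j) \<in> R^^(n+c) \<longrightarrow> (x,j) \<in> R^^(n+d)" by blast
    obtain p where p: "p > 0" "(b,b) \<in> R^^p" using bC unfolding C_def by (auto simp: trancl_power)
    have "(b,b) \<in> R^^(p*c)" using relpow_cycle_mult[OF p(2)] .
    moreover have "p*c = (p*c - c) + c" using p(1) by simp
    ultimately have "(b,b) \<in> R^^((p*c - c) + c)" by metis
    then have "(x,b) \<in> R^^((p*c - c) + d)" using cd by blast
    moreover have "0 < (p*c - c) + d" using cd(1) by simp
    ultimately show ?thesis using trancl_power[of "(x,b)" R] by blast
  qed
  have inC: "b \<in> C" if "(a,b) \<in> R" "a \<in> C" for a b
  proof -
    have "b < M" using that RM by auto
    then have "(b,a) \<in> R^+" using reachC that by blast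
    then have "(b,b) \<in> R^+" using that(1) by (rule trancl_into_trancl)
    then show ?thesis using \<open>b<M\<close> C_def by auto
  qed
  define N where "N = {..<M} - C"
  define f where "f x = card {z\<in>N. (x,z) \<in> R^+}" for x
  have fdec: "f y < f x" if "x \<in> N" "y \<in> N" "(x,y) \<in> R" for x y
  proof -
    have "{z\<in>N. (y,z) \<in> R^+} \<subset> {z\<in>N. (x,z) \<in> R^+}"
    proof
      show "{z\<in>N. (y,z) \<in> R^+} \<subseteq> {z\<in>N. (x,z) \<in> R^+}"
        using that(3) by (auto intro: trancl_into_trancl2)
      have "y \<in> {z\<in>N. (x,z) \<in> R^+}" using that by auto
      moreover have "y \<notin> {z\<in>N. (y,z) \<in> R^+}" using that(2) unfolding N_def C_def by auto
      ultimately show "{z\<in>N. (y,z) \<in> R^+} \<noteq> {z\<in>N. (x,z) \<in> R^+}" by blast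
    qed
    moreover have "finite {z\<in>N. (x,z) \<in> R^+}" unfolding N_def by auto
    ultimately show ?thesis unfolding f_def by (rule psubset_card_mono[rotated])
  qed
  have finC: "finite C" unfolding C_def by auto
  have finN: "finite N" unfolding N_def by auto
  define cs where "cs = sorted_list_of_set C"
  define xs where "xs = sort_key f (sorted_list_of_set N)"
  define L where "L = cs @ xs"
  define m where "m = length cs"
  have setcs: "set cs = C" and dcs: "distinct cs" using finC unfolding cs_def by auto
  have setxs: "set xs = N" and dxs: "distinct xs" using finN unfolding xs_def by auto
  have dL: "distinct L" unfolding L_def using dcs dxs setcs setxs N_def by auto
  have setL: "set L = {..<M}" unfolding L_def using setcs setxs N_def C_def by auto
  have lenL: "length L = M" using distinct_card[OF dL] setL by simp
  define \<sigma> where "\<sigma> = (\<lambda>i. L ! i)"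
  have bij: "bij_betw \<sigma> {..<M} {..<M}" unfolding \<sigma>_def using bij_betw_nth[OF dL] lenL setL by simp
  have sC: "\<sigma> i \<in> C" if "i < m" for i
    using that setcs unfolding \<sigma>_def L_def m_def by (auto simp: nth_append)
  have sN: "\<sigma> i \<in> N" "\<sigma> i = xs ! (i - m)" if "m \<le> i" "i < M" for i
    using that setxs lenL unfolding \<sigma>_def L_def m_def by (auto simp: nth_append)
  have sM: "\<sigma> i < M" if "i < M" for i using that setL lenL unfolding \<sigma>_def by (metis lessThan_iff nth_mem)
  have mpos: "0 < m" using cyc setcs unfolding m_def C_def by (metis card_gt_0_iff distinct_card dcs empty_iff finC mem_Collect_eq C_def)
  have mM: "m \<le> M" using lenL unfolding m_def L_def by simp
  have Rpos: "(\<sigma> i, \<sigma> j) \<in> R" if "G (\<sigma> i) (\<sigma> j) \<noteq> 0" "i < M" "j < M" for i j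
    using that nn sM unfolding R_def by (simp add: order_less_le)
  have c1: "\<forall>i<m. \<forall>j. m \<le> j \<and> j < M \<longrightarrow> G (\<sigma> i) (\<sigma> j) = 0"
  proof (intro allI impI; rule ccontr)
    fix i j assume ij: "i < m" "m \<le> j \<and> j < M" "G (\<sigma> i) (\<sigma> j) \<noteq> 0"
    then have "(\<sigma> i, \<sigma> j) \<in> R" using Rpos mM by auto
    then have "\<sigma> j \<in> C" using inC sC ij by blast
    then show False using sN[of j] ij N_def by auto
  qed
  have c3: "\<forall>i j. m \<le> i \<and> i \<le> j \<and> j < M \<longrightarrow> G (\<sigma> i) (\<sigma> j) = 0"
  proof (intro allI impI; rule ccontr)
    fix i j assume ij: "m \<le> i \<and> i \<le> j \<and> j < M" "G (\<sigma> i) (\<sigma> j) \<noteq> 0"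
    then have "(\<sigma> i, \<sigma> j) \<in> R" using Rpos by auto
    then have lt: "f (\<sigma> j) < f (\<sigma> i)" using fdec sN ij by auto
    have lxs: "length xs = M - m" using lenL unfolding L_def m_def by simp
    have "sorted (map f xs)" unfolding xs_def by simp
    then have "(map f xs) ! (i - m) \<le> (map f xs) ! (j - m)"
      using ij lxs by (intro sorted_nth_mono) auto
    moreover have "i - m < length xs" "j - m < length xs" using ij lxs by auto
    ultimately have "f (xs ! (i - m)) \<le> f (xs ! (j - m))" by (metis nth_map)
    then show False using lt sN ij by auto
  qed
  define Rm where "Rm = {(u,v). u \<in> {..<m} \<and> v \<in> {..<m} \<and> G (\<sigma> u) (\<sigma> v) > 0}"
  have inv: "\<exists>j<m. \<sigma> j = b" if "b \<in> C" for b
    using that setcs unfolding \<sigma>_def L_def m_def by (metis in_set_conv_nth nth_append)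
  have lift: "(a,b) \<in> R^+ \<Longrightarrow> a \<in> C \<Longrightarrow> i < m \<Longrightarrow> \<sigma> i = a \<Longrightarrow> b \<in> C \<and> (\<exists>j<m. \<sigma> j = b \<and> (i,j) \<in> Rm^+)" for a b i
  proof (induction b rule: trancl_induct)
    case (base y)
    have yC: "y \<in> C" using inC base by blast
    then obtain j where j: "j < m" "\<sigma> j = y" using inv by blast
    have "(i,j) \<in> Rm" using base j unfolding Rm_def R_def by auto
    then show ?case using yC j by blast
  next
    case (step y z)
    then obtain j where j: "j < m" "\<sigma> j = y" "(i,j)\<in>Rm^+" and yC: "y \<in> C" by blast
    have zC: "z \<in> C" using inC step yC by blast
    then obtain k where k: "k < m" "\<sigma> k = z" using inv by blast
    have "(j,k) \<in> Rm" using step j k unfolding Rm_def R_def by auto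
    then have "(i,k) \<in> Rm^+" using j(3) by (rule trancl_into_trancl[rotated])
    then show ?case using zC k by blast
  qed
  have injs: "i = j" if "\<sigma> i = \<sigma> j" "i < M" "j < M" for i j
    using that dL lenL unfolding \<sigma>_def by (simp add: nth_eq_iff_index_eq)
  have c2: "irreducible_on {..<m} (\<lambda>i j. G (\<sigma> i) (\<sigma> j))"
    unfolding irreducible_on_def
  proof (intro ballI)
    fix i j assume ij: "i \<in> {..<m}" "j \<in> {..<m}"
    have "(\<sigma> i, \<sigma> j) \<in> R^+" using reachC sC sM ij mM by auto
    then obtain j' where "j' < m" "\<sigma> j' = \<sigma> j" "(i,j') \<in> Rm^+" using lift sC ij by blast
    moreover then have "j' = j" using injs ij mM by auto
    ultimately show "(i,j) \<in> {(u,v). u \<in> {..<m} \<and> v \<in> {..<m} \<and> G (\<sigma> u) (\<sigma> v) > 0}\<^sup>+"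
      unfolding Rm_def by simp
  qed
  show ?thesis using bij mpos mM c1 c2 c3 by blast
qed
end
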